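(* Assume the cost $c$ is outcome monotonic, and let $\tau_0=1/2$ be the optimal non-strategic threshold. For any threshold $\tau\in[0,1]$, if $\mathcal U(\tau)>\mathcal U(\tau_0)$ then $\mathcal B(\tau)>\mathcal B(\tau_0)$.
   Context: Setting: features $x\in\mathcal X$, labels $y\in\{0,1\}$, joint distribution of $(X,Y)$; outcome likelihood $\ell(x)=\Pr[Y=1\mid X=x]>0$ for all $x$. Outcome monotonic cost $c:\mathcal X\times\mathcal X\to\mathbb R_{\ge0}$: for all $x,x',x^*$, (i) $c(x,x')>0$ iff $\ell(x')>\ell(x)$; (ii) $c(x,x^* )>c(x',x^* )>0$ iff $\ell(x^* )>\ell(x')>\ell(x)$; (iii) $c(x,x^* )>c(x,x')>0$ iff $\ell(x^* )>\ell(x')>\ell(x)$. Given a classifier $f$, individual utility $u_x(f,x')=f(x')-c(x,x')$; best response $\Delta(x)$: equals $x$ if $f(x)=1$ or no maximizer $x'$ of $u_x(f,\cdot)$ has $f(x')=1$, otherwise an arbitrary maximizer $x'$ with $f(x')=1$. Institutional utility $\mathcal U(f)=\Pr[f(\Delta(X))=Y]$; social burden $\mathcal B(f)=\mathbb E[\min_{x':f(x')=1}c(X,x')\mid Y=1]$. Threshold classifier $f_\tau(x)=\mathbf 1[\ell(x)\ge\tau]$; $\mathcal U(\tau)=\mathcal U(f_\tau)$, $\mathcal B(\tau)=\mathcal B(f_\tau)$. All minima/maxima appearing are assumed attained. *)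

theory Defs
  imports "HOL-Probability.Probability"
begin

text \<open>The joint distribution of (X,Y) is given by the
marginal law mu of X together with the outcome likelihood l(x) = Pr[Y=1 | X=x].
Classifiers are boolean-valued (True = label 1).\<close>

definition outcome_monotonic :: "('x \<Rightarrow> real) \<Rightarrow> ('x \<Rightarrow> 'x \<Rightarrow> real) \<Rightarrow> bool" where
  "outcome_monotonic l c \<longleftrightarrow>
     (\<forall>x x'. c x x' > 0 \<longleftrightarrow> l x' > l x) \<and>
     (\<forall>x x' xs. (c x xs > c x' xs \<and> c x' xs > 0) \<longleftrightarrow> (l xs > l x' \<and> l x' > l x)) \<and>
     (\<forall>x x' xs. (c x xs > c x x' \<and> c x x' > 0) \<longleftrightarrow> (l xs > l x' \<and> l x' > l x))"

definition indiv_utility :: "('x \<Rightarrow> bool) \<Rightarrow> ('x \<Rightarrow> 'x \<Rightarrow> real) \<Rightarrow> 'x \<Rightarrow> 'x \<Rightarrow> real" where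
  "indiv_utility f c x x' = (if f x' then 1 else 0) - c x x'"

definition is_best_response :: "('x \<Rightarrow> bool) \<Rightarrow> ('x \<Rightarrow> 'x \<Rightarrow> real) \<Rightarrow> ('x \<Rightarrow> 'x) \<Rightarrow> bool" where
  "is_best_response f c \<Delta> \<longleftrightarrow>
     (\<forall>x. if f x \<or> \<not> (\<exists>x'. (\<forall>z. indiv_utility f c x z \<le> indiv_utility f c x x') \<and> f x')
          then \<Delta> x = x
          else (\<forall>z. indiv_utility f c x z \<le> indiv_utility f c x (\<Delta> x)) \<and> f (\<Delta> x))"

definition threshold_clf :: "('x \<Rightarrow> real) \<Rightarrow> real \<Rightarrow> 'x \<Rightarrow> bool" where
  "threshold_clf l \<tau> x \<longleftrightarrow> l x \<ge> \<tau>"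

text \<open>Pr[f(Delta X) = Y]\<close>
definition inst_utility :: "'x measure \<Rightarrow> ('x \<Rightarrow> real) \<Rightarrow> ('x \<Rightarrow> bool) \<Rightarrow> ('x \<Rightarrow> 'x) \<Rightarrow> real" where
  "inst_utility \<mu> l f \<Delta> = (\<integral>x. (if f (\<Delta> x) then l x else 1 - l x) \<partial>\<mu>)"

definition min_cost :: "('x \<Rightarrow> 'x \<Rightarrow> real) \<Rightarrow> ('x \<Rightarrow> bool) \<Rightarrow> 'x \<Rightarrow> real" where
  "min_cost c f x = Inf {c x x' | x'. f x'}"

text \<open>E[min_{f x' = 1} c(X,x') | Y = 1]\<close>
definition social_burden :: "'x measure \<Rightarrow> ('x \<Rightarrow> real) \<Rightarrow> ('x \<Rightarrow> 'x \<Rightarrow> real) \<Rightarrow> ('x \<Rightarrow> bool) \<Rightarrow> real" where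
  "social_burden \<mu> l c f = (\<integral>x. l x * min_cost c f x \<partial>\<mu>) / (\<integral>x. l x \<partial>\<mu>)"

end

theory Submission
  imports Defs
begin

lemma om_i: "outcome_monotonic l c \<Longrightarrow> c x x' > 0 \<longleftrightarrow> l x' > l x"
  unfolding outcome_monotonic_def by blast

lemma om_ii: "outcome_monotonic l c \<Longrightarrow> c x xs > c x' xs \<Longrightarrow> c x' xs > 0 \<Longrightarrow> l x' > l x"
  unfolding outcome_monotonic_def by blast

lemma mc_le:
  assumes nn: "\<forall>x x'. c x x' \<ge> 0" and z: "threshold_clf l t z"
  shows "min_cost c (threshold_clf l t) x \<le> c x z"
  unfolding min_cost_def
  by (rule cInf_lower) (use z nn in \<open>auto intro!: bdd_belowI[where m=0]\<close>)

lemma mc_nonneg: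
  assumes nn: "\<forall>x x'. c x x' \<ge> 0" and ex: "\<exists>z. threshold_clf l t z"
  shows "min_cost c (threshold_clf l t) x \<ge> 0"
  unfolding min_cost_def
  by (rule cInf_greatest) (use ex nn in auto)

lemma mc_attain:
  assumes "threshold_clf l t xs" "\<forall>z. threshold_clf l t z \<longrightarrow> c x xs \<le> c x z"
  shows "min_cost c (threshold_clf l t) x = c x xs"
  unfolding min_cost_def
  by (rule cInf_eq_minimum) (use assms in auto)

lemma c_self:
  assumes "outcome_monotonic l c" "\<forall>x x'. c x x' \<ge> 0"
  shows "c x x = 0"
  using om_i[OF assms(1), of x x] assms(2) by (metis less_irrefl order_neq_le_trans)

lemma mc_zero:
  assumes mono: "outcome_monotonic l c" and nn: "\<forall>x x'. c x x' \<ge> 0"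
    and x: "threshold_clf l t x"
  shows "min_cost c (threshold_clf l t) x = 0"
  using mc_le[OF nn x, of x] mc_nonneg[OF nn, of l t x] x c_self[OF mono nn, of x] by fastforce

lemma br_acc:
  assumes mono: "outcome_monotonic l c" and nn: "\<forall>x x'. c x x' \<ge> 0"
    and att: "\<forall>x. \<exists>x'. threshold_clf l t x' \<and> (\<forall>z. threshold_clf l t z \<longrightarrow> c x x' \<le> c x z)"
    and br: "is_best_response (threshold_clf l t) c \<Delta>"
  shows "threshold_clf l t (\<Delta> x) \<longleftrightarrow> min_cost c (threshold_clf l t) x \<le> 1"
proof -
  let ?f = "threshold_clf l t"
  let ?m = "min_cost c ?f x"
  have brx: "if ?f x \<or> \<not> (\<exists>x'. (\<forall>z. indiv_utility ?f c x z \<le> indiv_utility ?f c x x') \<and> ?f x')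
          then \<Delta> x = x
          else (\<forall>z. indiv_utility ?f c x z \<le> indiv_utility ?f c x (\<Delta> x)) \<and> ?f (\<Delta> x)"
    using br unfolding is_best_response_def by blast
  have cxx: "c x x = 0" using c_self[OF mono nn] .
  obtain xs where xs: "?f xs" "\<forall>z. ?f z \<longrightarrow> c x xs \<le> c x z" using att by blast
  have mxs: "?m = c x xs" using mc_attain[of l t xs c x, OF xs] .
  show ?thesis
  proof (cases "?f x")
    case True
    then show ?thesis using brx mc_zero[OF mono nn True] by simp
  next
    case False
    show ?thesis
    proof (cases "\<exists>x'. (\<forall>z. indiv_utility ?f c x z \<le> indiv_utility ?f c x x') \<and> ?f x'")
      case True
      then obtain x' where x': "\<forall>z. indiv_utility ?f c x z \<le> indiv_utility ?f c x x'" "?f x'" by blast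
      have "indiv_utility ?f c x x \<le> indiv_utility ?f c x x'" using x' by blast
      then have "c x x' \<le> 1" using False x'(2) cxx unfolding indiv_utility_def by simp
      then have "?m \<le> 1" using mc_le[OF nn x'(2), of x] by simp
      moreover have "?f (\<Delta> x)" using brx False True by auto
      ultimately show ?thesis by simp
    next
      case nt: False
      have "\<not> ?m \<le> 1"
      proof
        assume m1: "?m \<le> 1"
        have "\<forall>z. indiv_utility ?f c x z \<le> indiv_utility ?f c x xs"
        proof
          fix z show "indiv_utility ?f c x z \<le> indiv_utility ?f c x xs"
          proof (cases "?f z")
            case True then show ?thesis using xs unfolding indiv_utility_def by auto
          next
            case False then show ?thesis using xs m1 mxs nn unfolding indiv_utility_def
              by (smt (verit))
          qed
        qed
        then show False using nt xs(1) by blast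
      qed
      moreover have "\<Delta> x = x" using brx nt by auto
      ultimately show ?thesis using False by simp
    qed
  qed
qed

lemma acc_up:
  assumes mono: "outcome_monotonic l c" and nn: "\<forall>x x'. c x x' \<ge> 0"
    and att: "\<forall>x. \<exists>x'. threshold_clf l t x' \<and> (\<forall>z. threshold_clf l t z \<longrightarrow> c x x' \<le> c x z)"
    and mx: "min_cost c (threshold_clf l t) x \<le> 1" and lxy: "l x \<le> l y"
  shows "min_cost c (threshold_clf l t) y \<le> 1"
proof (cases "threshold_clf l t y")
  case True then show ?thesis using mc_zero[OF mono nn True] by simp
next
  case False
  then have ly: "l y < t" unfolding threshold_clf_def by simp
  obtain xs where xs: "threshold_clf l t xs" "\<forall>z. threshold_clf l t z \<longrightarrow> c x xs \<le> c x z"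
    using att by blast
  have mxs: "min_cost c (threshold_clf l t) x = c x xs" using mc_attain[of l t xs c x, OF xs] .
  have lxs: "l xs \<ge> t" using xs(1) unfolding threshold_clf_def by simp
  have pos: "c x xs > 0" using om_i[OF mono, of x xs] lxs ly lxy by simp
  have "c y xs \<le> c x xs"
  proof (rule ccontr)
    assume "\<not> c y xs \<le> c x xs"
    then have "l x > l y" using om_ii[OF mono, of x xs y] pos by simp
    then show False using lxy by simp
  qed
  then show ?thesis using mc_le[OF nn xs(1), of y] mx mxs by simp
qed

lemma acc_meas:
  assumes mono: "outcome_monotonic l c" and nn: "\<forall>x x'. c x x' \<ge> 0"
    and att: "\<forall>x. \<exists>x'. threshold_clf l t x' \<and> (\<forall>z. threshold_clf l t z \<longrightarrow> c x x' \<le> c x z)"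
    and lm: "l \<in> borel_measurable M"
  shows "(\<lambda>x. if min_cost c (threshold_clf l t) x \<le> 1 then l x else 1 - l x) \<in> borel_measurable M"
proof -
  define I where "I = {r. \<exists>a. min_cost c (threshold_clf l t) a \<le> 1 \<and> l a \<le> r}"
  define h :: "real \<Rightarrow> real" where "h r = (if r \<in> I then 1 else 0)" for r
  have hm: "mono h" unfolding mono_def h_def I_def by (auto intro: order_trans)
  have eq: "min_cost c (threshold_clf l t) x \<le> 1 \<longleftrightarrow> l x \<in> I" for x
    unfolding I_def using acc_up[OF mono nn att] by blast
  have "(\<lambda>x. h (l x)) \<in> borel_measurable M"
    using measurable_compose[OF lm borel_measurable_mono[OF hm]] by simp
  then have "(\<lambda>x. h (l x) * l x + (1 - h (l x)) * (1 - l x)) \<in> borel_measurable M"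
    using lm by measurable
  moreover have "(\<lambda>x. h (l x) * l x + (1 - h (l x)) * (1 - l x)) =
     (\<lambda>x. if min_cost c (threshold_clf l t) x \<le> 1 then l x else 1 - l x)"
    by (auto simp: h_def eq)
  ultimately show ?thesis by simp
qed

theorem corollary1:
  fixes \<mu> :: "'x measure" and l :: "'x \<Rightarrow> real" and c :: "'x \<Rightarrow> 'x \<Rightarrow> real"
    and \<tau> :: real and \<Delta> \<Delta>0 :: "'x \<Rightarrow> 'x"
  assumes prob: "prob_space \<mu>" and space: "space \<mu> = UNIV"
    and l_meas: "l \<in> borel_measurable \<mu>"
    and l_pos: "\<forall>x. 0 < l x \<and> l x \<le> 1"
    and c_nonneg: "\<forall>x x'. c x x' \<ge> 0"
    and mono: "outcome_monotonic l c"
    and attained: "\<forall>t \<in> {\<tau>, 1/2}. \<forall>x. \<exists>x'. threshold_clf l t x' \<and>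
                      (\<forall>z. threshold_clf l t z \<longrightarrow> c x x' \<le> c x z)"
    and burden_int: "\<forall>t \<in> {\<tau>, 1/2}.
                      integrable \<mu> (\<lambda>x. l x * min_cost c (threshold_clf l t) x)"
    and tau: "\<tau> \<in> {0..1}"
    and br: "is_best_response (threshold_clf l \<tau>) c \<Delta>"
    and br0: "is_best_response (threshold_clf l (1/2)) c \<Delta>0"
    and U_gt: "inst_utility \<mu> l (threshold_clf l \<tau>) \<Delta> > inst_utility \<mu> l (threshold_clf l (1/2)) \<Delta>0"
  shows "social_burden \<mu> l c (threshold_clf l \<tau>) > social_burden \<mu> l c (threshold_clf l (1/2))"
proof -
  interpret prob_space \<mu> by (rule prob)
  let ?f1 = "threshold_clf l \<tau>" and ?f0 = "threshold_clf l (1/2)"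
  define m1 where "m1 = min_cost c ?f1"
  define m0 where "m0 = min_cost c ?f0"
  define u1 where "u1 x = (if m1 x \<le> 1 then l x else 1 - l x)" for x
  define u0 where "u0 x = (if m0 x \<le> 1 then l x else 1 - l x)" for x
  have att1: "\<forall>x. \<exists>x'. ?f1 x' \<and> (\<forall>z. ?f1 z \<longrightarrow> c x x' \<le> c x z)" using attained by simp
  have att0: "\<forall>x. \<exists>x'. ?f0 x' \<and> (\<forall>z. ?f0 z \<longrightarrow> c x x' \<le> c x z)" using attained by simp
  have U1: "inst_utility \<mu> l ?f1 \<Delta> = integral\<^sup>L \<mu> u1"
    unfolding inst_utility_def u1_def m1_def using br_acc[OF mono c_nonneg att1 br] by simp
  have U0: "inst_utility \<mu> l ?f0 \<Delta>0 = integral\<^sup>L \<mu> u0"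
    unfolding inst_utility_def u0_def m0_def using br_acc[OF mono c_nonneg att0 br0] by simp
  have u1m: "u1 \<in> borel_measurable \<mu>" unfolding u1_def m1_def
    using acc_meas[OF mono c_nonneg att1 l_meas] by simp
  have u0m: "u0 \<in> borel_measurable \<mu>" unfolding u0_def m0_def
    using acc_meas[OF mono c_nonneg att0 l_meas] by simp
  have bnd: "\<And>x. norm (u1 x) \<le> 1" "\<And>x. norm (u0 x) \<le> 1"
    proof -
    fix x have "0 < l x" "l x \<le> 1" using l_pos by auto
    then show "norm (u1 x) \<le> 1" "norm (u0 x) \<le> 1" unfolding u1_def u0_def by auto
  qed
  have u1i: "integrable \<mu> u1"
    by (rule integrable_const_bound[where B=1]) (use u1m bnd in auto)
  have u0i: "integrable \<mu> u0"
    by (rule integrable_const_bound[where B=1]) (use u0m bnd in auto)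
  have ex1: "\<exists>z. ?f1 z" and ex0: "\<exists>z. ?f0 z" using att1 att0 by blast+
  have tgt: "\<tau> > 1/2"
  proof (rule ccontr)
    assume "\<not> \<tau> > 1/2"
    then have tl: "\<tau> \<le> 1/2" by simp
    have "u1 x \<le> u0 x" for x
    proof -
      have a: "m0 x \<le> 1 \<Longrightarrow> m1 x \<le> 1"
      proof -
        assume "m0 x \<le> 1"
        obtain xs where xs: "?f0 xs" "\<forall>z. ?f0 z \<longrightarrow> c x xs \<le> c x z" using att0 by blast
        have "?f1 xs" using xs(1) tl unfolding threshold_clf_def by simp
        then show "m1 x \<le> 1" using mc_le[OF c_nonneg, of l \<tau> xs x] mc_attain[of l "1/2" xs c x, OF xs] \<open>m0 x \<le> 1\<close>
          unfolding m1_def m0_def by simp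
      qed
      have b: "m1 x \<le> 1 \<Longrightarrow> \<not> m0 x \<le> 1 \<Longrightarrow> l x < 1/2"
        using mc_zero[OF mono c_nonneg, of "1/2" x] unfolding m0_def threshold_clf_def
        by (cases "1/2 \<le> l x") auto
      show ?thesis unfolding u1_def u0_def using a b by auto
    qed
    then have "integral\<^sup>L \<mu> u1 \<le> integral\<^sup>L \<mu> u0" by (intro integral_mono u1i u0i)
    then show False using U_gt U1 U0 by simp
  qed
  have mle: "m0 x \<le> m1 x" for x
  proof -
    obtain xs where xs: "?f1 xs" "\<forall>z. ?f1 z \<longrightarrow> c x xs \<le> c x z" using att1 by blast
    have "?f0 xs" using xs(1) tgt unfolding threshold_clf_def by simp
    then show ?thesis using mc_le[OF c_nonneg, of l "1/2" xs x] mc_attain[of l \<tau> xs c x, OF xs]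
      unfolding m1_def m0_def by simp
  qed
  define g1 where "g1 x = l x * m1 x" for x
  define g0 where "g0 x = l x * m0 x" for x
  have g1i: "integrable \<mu> g1" using burden_int unfolding g1_def m1_def by simp
  have g0i: "integrable \<mu> g0" using burden_int unfolding g0_def m0_def by simp
  have gle: "g0 x \<le> g1 x" for x
    unfolding g0_def g1_def using mle[of x] l_pos by (simp add: mult_left_mono less_imp_le)
  have glt: "integral\<^sup>L \<mu> g0 < integral\<^sup>L \<mu> g1"
  proof (rule ccontr)
    assume "\<not> ?thesis"
    then have "integral\<^sup>L \<mu> (\<lambda>x. g1 x - g0 x) = 0"
      using integral_mono[OF g0i g1i gle] g1i g0i by simp
    then have "AE x in \<mu>. g1 x - g0 x = 0"
      using integral_nonneg_eq_0_iff_AE[of \<mu> "\<lambda>x. g1 x - g0 x"] g1i g0i gle by simp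
    then have "AE x in \<mu>. u1 x = u0 x"
    proof (rule AE_mp, intro AE_I2 impI)
      fix x assume "g1 x - g0 x = 0"
      then have "m1 x = m0 x" using l_pos unfolding g1_def g0_def
        by (metis eq_iff_diff_eq_0 less_irrefl mult_cancel_left)
      then show "u1 x = u0 x" unfolding u1_def u0_def by simp
    qed
    then have "integral\<^sup>L \<mu> u1 = integral\<^sup>L \<mu> u0" by (rule integral_cong_AE[OF u1m u0m])
    then show False using U_gt U1 U0 by simp
  qed
  have lint: "integrable \<mu> l"
    by (rule integrable_const_bound[where B=1]) (use l_meas l_pos in \<open>auto intro!: AE_I2 simp: abs_le_iff less_imp_le\<close>)
  have lpos: "integral\<^sup>L \<mu> l > 0"
  proof -
    have "integral\<^sup>L \<mu> l \<ge> 0" using l_pos by (simp add: less_imp_le)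
    moreover have "integral\<^sup>L \<mu> l \<noteq> 0"
    proof
      assume "integral\<^sup>L \<mu> l = 0"
      then have "AE x in \<mu>. l x = 0"
        using integral_nonneg_eq_0_iff_AE[OF lint] l_pos by (simp add: less_imp_le)
      then have "AE x in \<mu>. False"
        by (rule AE_mp) (use l_pos in \<open>auto intro!: AE_I2 simp: less_le\<close>)
      then show False using AE_False emeasure_space_1 by simp
    qed
    ultimately show ?thesis by simp
  qed
  show ?thesis unfolding social_burden_def
    using glt lpos unfolding g1_def g0_def m1_def m0_def by (simp add: divide_strict_right_mono)
qed

end
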